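(* Let $\ell$ be a kernel on a set $X$ with the multiplier separation property. Then $\ell$ has the automatic separation property.
   Context: A kernel on $X$ is a positive semi-definite function $\ell:X\times X\to\mathbb{C}$ (with $\ell_z\ne0$ for all $z$); $\mathcal{H}_\ell$ its reproducing kernel Hilbert space, $\ell_w=\ell(\cdot,w)$, $\hat\ell_w=\ell_w/\|\ell_w\|$, $d_\ell(z,w)=\sqrt{1-|\langle\hat\ell_z,\hat\ell_w\rangle|^2}$. $\mathrm{Mult}(\mathcal{H}_\ell)$ is the algebra of functions $\phi$ with $f\mapsto\phi f$ bounded on $\mathcal{H}_\ell$, normed by the operator norm. $\ell$ has the multiplier separation property if for every $\delta>0$ there is $\epsilon>0$ such that for any two points $\lambda\ne\mu$ in $X$ with $d_\ell(\lambda,\mu)>\delta$ there is $\phi\in\mathrm{Mult}(\mathcal{H}_\ell)$ of norm at most $1$ with $\phi(\lambda)=\epsilon$ and $\phi(\mu)=0$. A sequence $\{\lambda_i\}$ is weakly separated by $\ell$ if $d_\ell(\lambda_i,\lambda_j)\ge\epsilon>0$ for $i\ne j$; for $n\ge2$ it is $n$-weakly separated by $\ell$ if there is $\epsilon>0$ such that for every $n$-point subset $\{\mu_1,\dots,\mu_n\}$ of it, $\mathrm{dist}(\hat\ell_{\mu_1},\mathrm{span}\{\hat\ell_{\mu_2},\dots,\hat\ell_{\mu_n}\})\ge\epsilon$. $\ell$ has the automatic separation property if every sequence weakly separated by $\ell$ is $n$-weakly separated by $\ell$ for every $n\ge3$. *)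

theory Defs
  imports Complex_Main
begin

text \<open>Functions on a set X are modelled as functions on a type 'x (X = UNIV).
  The RKHS is represented concretely as a set H of functions 'x \<Rightarrow> complex
  together with an inner product ip (linear in the first argument).\<close>

definition kernel :: "('x \<Rightarrow> 'x \<Rightarrow> complex) \<Rightarrow> bool" where
  "kernel l \<longleftrightarrow>
     (\<forall>(F::'x set) (c::'x \<Rightarrow> complex). finite F \<longrightarrow>
        (\<Sum>x\<in>F. \<Sum>y\<in>F. c x * cnj (c y) * l x y) \<in> \<real> \<and>
        Re (\<Sum>x\<in>F. \<Sum>y\<in>F. c x * cnj (c y) * l x y) \<ge> 0)
   \<and> (\<forall>z. (\<lambda>x. l x z) \<noteq> (\<lambda>_. 0))"

definition hnorm :: "(('x \<Rightarrow> complex) \<Rightarrow> ('x \<Rightarrow> complex) \<Rightarrow> complex) \<Rightarrow> ('x \<Rightarrow> complex) \<Rightarrow> real" where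
  "hnorm ip f = sqrt (Re (ip f f))"

definition is_rkhs ::
  "('x \<Rightarrow> 'x \<Rightarrow> complex) \<Rightarrow> ('x \<Rightarrow> complex) set
     \<Rightarrow> (('x \<Rightarrow> complex) \<Rightarrow> ('x \<Rightarrow> complex) \<Rightarrow> complex) \<Rightarrow> bool" where
  "is_rkhs l H ip \<longleftrightarrow>
     (\<lambda>_. 0) \<in> H
   \<and> (\<forall>f\<in>H. \<forall>g\<in>H. (\<lambda>x. f x + g x) \<in> H)
   \<and> (\<forall>f\<in>H. \<forall>a. (\<lambda>x. a * f x) \<in> H)
   \<and> (\<forall>f\<in>H. \<forall>g\<in>H. \<forall>h\<in>H. ip (\<lambda>x. f x + g x) h = ip f h + ip g h)
   \<and> (\<forall>f\<in>H. \<forall>g\<in>H. \<forall>a. ip (\<lambda>x. a * f x) g = a * ip f g)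
   \<and> (\<forall>f\<in>H. \<forall>g\<in>H. ip g f = cnj (ip f g))
   \<and> (\<forall>f\<in>H. Re (ip f f) \<ge> 0)
   \<and> (\<forall>f\<in>H. ip f f = 0 \<longrightarrow> f = (\<lambda>_. 0))
   \<and> (\<forall>s::nat \<Rightarrow> ('x \<Rightarrow> complex). (\<forall>n. s n \<in> H) \<longrightarrow>
        (\<forall>e>0. \<exists>N. \<forall>m\<ge>N. \<forall>n\<ge>N. hnorm ip (\<lambda>x. s m x - s n x) < e) \<longrightarrow>
        (\<exists>g\<in>H. (\<lambda>n. hnorm ip (\<lambda>x. s n x - g x)) \<longlonglongrightarrow> 0))
   \<and> (\<forall>w. (\<lambda>x. l x w) \<in> H)
   \<and> (\<forall>f\<in>H. \<forall>w. ip f (\<lambda>x. l x w) = f w)"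

definition khat :: "('x \<Rightarrow> 'x \<Rightarrow> complex) \<Rightarrow> (('x \<Rightarrow> complex) \<Rightarrow> ('x \<Rightarrow> complex) \<Rightarrow> complex)
    \<Rightarrow> 'x \<Rightarrow> ('x \<Rightarrow> complex)" where
  "khat l ip w = (\<lambda>x. l x w / complex_of_real (hnorm ip (\<lambda>y. l y w)))"

definition dker :: "('x \<Rightarrow> 'x \<Rightarrow> complex) \<Rightarrow> (('x \<Rightarrow> complex) \<Rightarrow> ('x \<Rightarrow> complex) \<Rightarrow> complex)
    \<Rightarrow> 'x \<Rightarrow> 'x \<Rightarrow> real" where
  "dker l ip z w = sqrt (1 - (cmod (ip (khat l ip z) (khat l ip w)))\<^sup>2)"

definition is_multiplier :: "('x \<Rightarrow> complex) set \<Rightarrow> (('x \<Rightarrow> complex) \<Rightarrow> ('x \<Rightarrow> complex) \<Rightarrow> complex)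
    \<Rightarrow> ('x \<Rightarrow> complex) \<Rightarrow> bool" where
  "is_multiplier H ip \<phi> \<longleftrightarrow>
     (\<forall>f\<in>H. (\<lambda>x. \<phi> x * f x) \<in> H) \<and>
     (\<exists>C. \<forall>f\<in>H. hnorm ip (\<lambda>x. \<phi> x * f x) \<le> C * hnorm ip f)"

definition mult_norm :: "('x \<Rightarrow> complex) set \<Rightarrow> (('x \<Rightarrow> complex) \<Rightarrow> ('x \<Rightarrow> complex) \<Rightarrow> complex)
    \<Rightarrow> ('x \<Rightarrow> complex) \<Rightarrow> real" where
  "mult_norm H ip \<phi> = Sup {hnorm ip (\<lambda>x. \<phi> x * f x) | f. f \<in> H \<and> hnorm ip f \<le> 1}"

definition multiplier_separation :: "('x \<Rightarrow> 'x \<Rightarrow> complex) \<Rightarrow> ('x \<Rightarrow> complex) set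
    \<Rightarrow> (('x \<Rightarrow> complex) \<Rightarrow> ('x \<Rightarrow> complex) \<Rightarrow> complex) \<Rightarrow> bool" where
  "multiplier_separation l H ip \<longleftrightarrow>
     (\<forall>\<delta>>0. \<exists>\<epsilon>>0. \<forall>la mu. la \<noteq> mu \<and> dker l ip la mu > \<delta> \<longrightarrow>
        (\<exists>\<phi>. is_multiplier H ip \<phi> \<and> mult_norm H ip \<phi> \<le> 1 \<and>
              \<phi> la = complex_of_real \<epsilon> \<and> \<phi> mu = 0))"

definition dist_span :: "(('x \<Rightarrow> complex) \<Rightarrow> ('x \<Rightarrow> complex) \<Rightarrow> complex) \<Rightarrow> ('x \<Rightarrow> complex)
    \<Rightarrow> ('b \<Rightarrow> ('x \<Rightarrow> complex)) \<Rightarrow> 'b set \<Rightarrow> real" where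
  "dist_span ip u g A =
     Inf {hnorm ip (\<lambda>x. u x - (\<Sum>\<nu>\<in>A. c \<nu> * g \<nu> x)) | c :: 'b \<Rightarrow> complex. True}"

definition weakly_separated :: "('x \<Rightarrow> 'x \<Rightarrow> complex) \<Rightarrow> (('x \<Rightarrow> complex) \<Rightarrow> ('x \<Rightarrow> complex) \<Rightarrow> complex)
    \<Rightarrow> (nat \<Rightarrow> 'x) \<Rightarrow> bool" where
  "weakly_separated l ip s \<longleftrightarrow>
     (\<exists>\<epsilon>>0. \<forall>i j. i \<noteq> j \<longrightarrow> dker l ip (s i) (s j) \<ge> \<epsilon>)"

definition n_weakly_separated :: "nat \<Rightarrow> ('x \<Rightarrow> 'x \<Rightarrow> complex) \<Rightarrow> (('x \<Rightarrow> complex) \<Rightarrow> ('x \<Rightarrow> complex) \<Rightarrow> complex)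
    \<Rightarrow> (nat \<Rightarrow> 'x) \<Rightarrow> bool" where
  "n_weakly_separated n l ip s \<longleftrightarrow>
     (\<exists>\<epsilon>>0. \<forall>S. S \<subseteq> range s \<and> finite S \<and> card S = n \<longrightarrow>
        (\<forall>\<mu>\<in>S. dist_span ip (khat l ip \<mu>) (khat l ip) (S - {\<mu>}) \<ge> \<epsilon>))"

definition automatic_separation :: "('x \<Rightarrow> 'x \<Rightarrow> complex) \<Rightarrow> (('x \<Rightarrow> complex) \<Rightarrow> ('x \<Rightarrow> complex) \<Rightarrow> complex) \<Rightarrow> bool" where
  "automatic_separation l ip \<longleftrightarrow>
     (\<forall>s::nat \<Rightarrow> 'x. weakly_separated l ip s \<longrightarrow> (\<forall>n\<ge>3. n_weakly_separated n l ip s))"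

end

theory Submission
  imports Defs
begin

locale rk =
  fixes l :: "'x \<Rightarrow> 'x \<Rightarrow> complex" and H :: "('x \<Rightarrow> complex) set"
    and ip :: "('x \<Rightarrow> complex) \<Rightarrow> ('x \<Rightarrow> complex) \<Rightarrow> complex"
  assumes R: "is_rkhs l H ip"
begin

lemma zero_H: "(\<lambda>_. 0) \<in> H" using R unfolding is_rkhs_def by blast
lemma add_H: "f\<in>H \<Longrightarrow> g\<in>H \<Longrightarrow> (\<lambda>x. f x + g x) \<in> H" using R unfolding is_rkhs_def by blast
lemma scale_H: "f\<in>H \<Longrightarrow> (\<lambda>x. a * f x) \<in> H" using R unfolding is_rkhs_def by blast
lemma ip_add: "f\<in>H \<Longrightarrow> g\<in>H \<Longrightarrow> h\<in>H \<Longrightarrow> ip (\<lambda>x. f x + g x) h = ip f h + ip g h"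
  using R unfolding is_rkhs_def by blast
lemma ip_scale: "f\<in>H \<Longrightarrow> g\<in>H \<Longrightarrow> ip (\<lambda>x. a * f x) g = a * ip f g"
  using R unfolding is_rkhs_def by blast
lemma ip_cnj: "f\<in>H \<Longrightarrow> g\<in>H \<Longrightarrow> ip g f = cnj (ip f g)"
  using R unfolding is_rkhs_def by blast
lemma ip_pos: "f\<in>H \<Longrightarrow> Re (ip f f) \<ge> 0"
  using R unfolding is_rkhs_def by blast
lemma ip_zero: "f\<in>H \<Longrightarrow> ip f f = 0 \<Longrightarrow> f = (\<lambda>_. 0)"
  using R unfolding is_rkhs_def by blast
lemma kH: "(\<lambda>x. l x w) \<in> H"
  using R unfolding is_rkhs_def by blast
lemma repr: "f\<in>H \<Longrightarrow> ip f (\<lambda>x. l x w) = f w"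
  using R unfolding is_rkhs_def by blast

lemma diff_H: assumes "f\<in>H" "g\<in>H" shows "(\<lambda>x. f x - g x) \<in> H"
proof -
  have m: "(\<lambda>x. (-1) * g x) \<in> H" using scale_H assms by blast
  have "(\<lambda>x. f x + (-1) * g x) \<in> H" using add_H[OF assms(1) m] by simp
  then show ?thesis by simp
qed

lemma ip_diff: assumes f: "f\<in>H" and g: "g\<in>H" and h: "h\<in>H" shows "ip (\<lambda>x. f x - g x) h = ip f h - ip g h"
proof -
  define m where "m = (\<lambda>x. (-1) * g x)"
  have mH: "m \<in> H" unfolding m_def using scale_H g by blast
  have eq: "(\<lambda>x. f x - g x) = (\<lambda>x. f x + m x)" unfolding m_def by simp
  have "ip (\<lambda>x. f x - g x) h = ip (\<lambda>x. f x + m x) h" using eq by simp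
  also have "\<dots> = ip f h + ip m h" by (rule ip_add[OF f mH h])
  also have "ip m h = - ip g h" unfolding m_def using ip_scale[OF g h, of "-1"] by simp
  finally show ?thesis by simp
qed

lemma ip_add_r: assumes "f\<in>H" "g\<in>H" "h\<in>H" shows "ip h (\<lambda>x. f x + g x) = ip h f + ip h g"
proof -
  have "ip h (\<lambda>x. f x + g x) = cnj (ip (\<lambda>x. f x + g x) h)" using ip_cnj add_H assms by blast
  also have "\<dots> = cnj (ip f h) + cnj (ip g h)" using ip_add[OF assms] by simp
  also have "\<dots> = ip h f + ip h g" using ip_cnj[OF assms(1,3)] ip_cnj[OF assms(2,3)] by simp
  finally show ?thesis .
qed

lemma ip_scale_r: assumes "f\<in>H" "g\<in>H" shows "ip g (\<lambda>x. a * f x) = cnj a * ip g f"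
proof -
  have "ip g (\<lambda>x. a * f x) = cnj (ip (\<lambda>x. a * f x) g)" using ip_cnj scale_H assms by blast
  also have "\<dots> = cnj a * cnj (ip f g)" using ip_scale[OF assms] by simp
  also have "\<dots> = cnj a * ip g f" using ip_cnj[OF assms] by simp
  finally show ?thesis .
qed

lemma ip_diff_r: assumes "f\<in>H" "g\<in>H" "h\<in>H" shows "ip h (\<lambda>x. f x - g x) = ip h f - ip h g"
proof -
  have "ip h (\<lambda>x. f x - g x) = cnj (ip (\<lambda>x. f x - g x) h)" using ip_cnj diff_H assms by blast
  also have "\<dots> = cnj (ip f h) - cnj (ip g h)" using ip_diff[OF assms] by simp
  also have "\<dots> = ip h f - ip h g" using ip_cnj[OF assms(1,3)] ip_cnj[OF assms(2,3)] by simp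
  finally show ?thesis .
qed

lemma ip_zero_l: assumes "u\<in>H" shows "ip (\<lambda>_. 0) u = 0"
proof -
  have "ip (\<lambda>x. 0 * (\<lambda>_. 0) x) u = 0 * ip (\<lambda>_. 0) u" by (rule ip_scale[OF zero_H assms])
  then show ?thesis by simp
qed

lemma ip_zero_r: assumes "u\<in>H" shows "ip u (\<lambda>_. 0) = 0"
proof -
  have "ip u (\<lambda>_. 0) = cnj (ip (\<lambda>_. 0) u)" by (rule ip_cnj[OF zero_H assms])
  then show ?thesis using ip_zero_l[OF assms] by simp
qed

lemma ip_real: assumes "f\<in>H" shows "ip f f = complex_of_real (Re (ip f f))"
proof -
  have e: "ip f f = cnj (ip f f)" using ip_cnj assms by blast
  have "Im (ip f f) = Im (cnj (ip f f))" by (subst e, rule refl)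
  then have "Im (ip f f) = 0" by simp
  then show ?thesis by (simp add: complex_eq_iff)
qed

lemma sum_H: "finite A \<Longrightarrow> \<forall>\<nu>\<in>A. g \<nu> \<in> H \<Longrightarrow> (\<lambda>x. \<Sum>\<nu>\<in>A. c \<nu> * g \<nu> x) \<in> H"
proof (induction A rule: finite_induct)
  case empty then show ?case using zero_H by simp
next
  case (insert a A)
  have "(\<lambda>x. \<Sum>\<nu>\<in>insert a A. c \<nu> * g \<nu> x) = (\<lambda>x. (\<lambda>x. c a * g a x) x + (\<lambda>x. \<Sum>\<nu>\<in>A. c \<nu> * g \<nu> x) x)"
    using insert by simp
  then show ?case using insert add_H scale_H by simp
qed

lemma ip_sum_r: "finite A \<Longrightarrow> \<forall>\<nu>\<in>A. g \<nu> \<in> H \<Longrightarrow> u \<in> H \<Longrightarrow>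
   ip u (\<lambda>x. \<Sum>\<nu>\<in>A. c \<nu> * g \<nu> x) = (\<Sum>\<nu>\<in>A. cnj (c \<nu>) * ip u (g \<nu>))"
proof (induction A rule: finite_induct)
  case empty
  have "ip u (\<lambda>_. 0) = 0" by (rule ip_zero_r[OF empty(2)])
  then show ?case by simp
next
  case (insert a A)
  have ga: "g a \<in> H" using insert.prems by blast
  have gA: "\<forall>\<nu>\<in>A. g \<nu> \<in> H" using insert.prems by blast
  have uH: "u \<in> H" using insert.prems by blast
  have IH: "ip u (\<lambda>x. \<Sum>\<nu>\<in>A. c \<nu> * g \<nu> x) = (\<Sum>\<nu>\<in>A. cnj (c \<nu>) * ip u (g \<nu>))"
    using insert.IH gA uH by blast
  have eq: "(\<lambda>x. \<Sum>\<nu>\<in>insert a A. c \<nu> * g \<nu> x) = (\<lambda>x. c a * g a x + (\<Sum>\<nu>\<in>A. c \<nu> * g \<nu> x))"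
    using insert.hyps by simp
  have add: "ip u (\<lambda>x. c a * g a x + (\<Sum>\<nu>\<in>A. c \<nu> * g \<nu> x)) = ip u (\<lambda>x. c a * g a x) + ip u (\<lambda>x. \<Sum>\<nu>\<in>A. c \<nu> * g \<nu> x)"
    by (rule ip_add_r[OF scale_H[OF ga] sum_H[OF insert.hyps(1) gA] uH])
  have sc: "ip u (\<lambda>x. c a * g a x) = cnj (c a) * ip u (g a)" by (rule ip_scale_r[OF ga uH])
  have "ip u (\<lambda>x. \<Sum>\<nu>\<in>insert a A. c \<nu> * g \<nu> x) = cnj (c a) * ip u (g a) + (\<Sum>\<nu>\<in>A. cnj (c \<nu>) * ip u (g \<nu>))"
    unfolding eq add sc IH ..
  then show ?case using insert.hyps by simp
qed

lemma hnorm_scale: assumes "f\<in>H" shows "hnorm ip (\<lambda>x. a * f x) = cmod a * hnorm ip f"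
proof -
  have e1: "ip (\<lambda>x. a * f x) (\<lambda>x. a * f x) = a * ip f (\<lambda>x. a * f x)"
    by (rule ip_scale[OF assms scale_H[OF assms]])
  have e2: "ip f (\<lambda>x. a * f x) = cnj a * ip f f" by (rule ip_scale_r[OF assms assms])
  have e3: "a * (cnj a * ip f f) = complex_of_real ((cmod a)^2) * ip f f"
    by (metis complex_norm_square mult.assoc)
  have "ip (\<lambda>x. a * f x) (\<lambda>x. a * f x) = complex_of_real ((cmod a)^2) * ip f f"
    unfolding e1 e2 e3 ..
  then have "Re (ip (\<lambda>x. a * f x) (\<lambda>x. a * f x)) = (cmod a)^2 * Re (ip f f)" by simp
  then have "hnorm ip (\<lambda>x. a * f x) = sqrt ((cmod a)^2 * Re (ip f f))" unfolding hnorm_def by simp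
  also have "\<dots> = cmod a * hnorm ip f" unfolding hnorm_def real_sqrt_mult by simp
  finally show ?thesis .
qed

lemma CS: assumes f: "f\<in>H" and g: "g\<in>H" shows "cmod (ip f g) \<le> hnorm ip f * hnorm ip g"
proof (cases "ip g g = 0")
  case True
  then have "g = (\<lambda>_. 0)" using ip_zero g by blast
  then show ?thesis using ip_zero_r f zero_H by (simp add: hnorm_def)
next
  case False
  define r where "r = Re (ip g g)"
  have gr: "ip g g = complex_of_real r" using ip_real g r_def by blast
  have "r \<noteq> 0" using False gr by auto
  then have r0: "r > 0" using ip_pos[OF g] r_def by linarith
  define a where "a = ip f g"
  define t where "t = a / complex_of_real r"
  define h where "h = (\<lambda>x. f x - t * g x)"
  have tg: "(\<lambda>x. t * g x) \<in> H" using scale_H g by blast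
  have hH: "h \<in> H" unfolding h_def using diff_H f tg by blast
  have "ip h h = ip f h - t * ip g h"
    unfolding h_def[of] using ip_diff[OF f tg hH] ip_scale[OF g hH] unfolding h_def by simp
  also have "ip f h = ip f f - cnj t * a"
    unfolding h_def using ip_diff_r[OF f tg f] ip_scale_r[OF g f] a_def by simp
  also have "ip g h = cnj a - cnj t * complex_of_real r"
    unfolding h_def using ip_diff_r[OF f tg g] ip_scale_r[OF g g] a_def gr ip_cnj[OF f g] by simp
  finally have hh: "ip h h = ip f f - cnj t * a - t * (cnj a - cnj t * complex_of_real r)" .
  have ct: "cnj t = cnj a / complex_of_real r" unfolding t_def by simp
  have rne: "complex_of_real r \<noteq> 0" using r0 by simp
  have "ip h h = ip f f - a * cnj a / complex_of_real r"
    unfolding hh ct unfolding t_def using rne by (simp add: field_simps)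
  also have "a * cnj a / complex_of_real r = complex_of_real ((cmod a)^2 / r)"
    by (metis complex_norm_square of_real_divide)
  finally have "ip h h = ip f f - complex_of_real ((cmod a)^2 / r)" .
  then have "0 \<le> Re (ip f f) - (cmod a)^2 / r" using ip_pos[OF hH] by simp
  then have "(cmod a)^2 \<le> Re (ip f f) * r" using r0 by (simp add: field_simps)
  then have "sqrt ((cmod a)^2) \<le> sqrt (Re (ip f f) * r)" using real_sqrt_le_mono by blast
  then show ?thesis unfolding hnorm_def a_def r_def by (simp add: real_sqrt_mult)
qed


lemma hnorm_nonneg: "f \<in> H \<Longrightarrow> hnorm ip f \<ge> 0" unfolding hnorm_def using ip_pos by simp

lemma hnorm_zero: "hnorm ip (\<lambda>_. 0) = 0"
  unfolding hnorm_def using ip_zero_r[OF zero_H] by simp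

lemma contract:
  assumes m: "is_multiplier H ip \<phi>" and n1: "mult_norm H ip \<phi> \<le> 1" and h: "h \<in> H"
  shows "(\<lambda>x. \<phi> x * h x) \<in> H \<and> hnorm ip (\<lambda>x. \<phi> x * h x) \<le> hnorm ip h"
proof
  have mH: "\<forall>f\<in>H. (\<lambda>x. \<phi> x * f x) \<in> H" using m unfolding is_multiplier_def by blast
  then show "(\<lambda>x. \<phi> x * h x) \<in> H" using h by blast
  obtain C where C: "\<forall>f\<in>H. hnorm ip (\<lambda>x. \<phi> x * f x) \<le> C * hnorm ip f"
    using m unfolding is_multiplier_def by blast
  define t where "t = hnorm ip h"
  show "hnorm ip (\<lambda>x. \<phi> x * h x) \<le> hnorm ip h"
  proof (cases "t = 0")
    case True
    then have "Re (ip h h) = 0" unfolding t_def hnorm_def by simp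
    then have "ip h h = 0" using ip_real[OF h] by simp
    then have "h = (\<lambda>_. 0)" using ip_zero[OF h] by blast
    then show ?thesis using hnorm_zero by simp
  next
    case False
    then have t0: "t > 0" using hnorm_nonneg[OF h] t_def by (metis order_le_less)
    define f where "f = (\<lambda>x. complex_of_real (inverse t) * h x)"
    have fH: "f \<in> H" unfolding f_def using scale_H h by blast
    have nf: "hnorm ip f = 1" unfolding f_def hnorm_scale[OF h] t_def[symmetric] using t0 by (simp add: norm_inverse)
    have bdd: "bdd_above {hnorm ip (\<lambda>x. \<phi> x * f x) | f. f \<in> H \<and> hnorm ip f \<le> 1}"
    proof (rule bdd_aboveI[of _ "max C 0"])
      fix y assume "y \<in> {hnorm ip (\<lambda>x. \<phi> x * f x) | f. f \<in> H \<and> hnorm ip f \<le> 1}"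
      then obtain g where g: "g \<in> H" "hnorm ip g \<le> 1" "y = hnorm ip (\<lambda>x. \<phi> x * g x)" by blast
      have "y \<le> C * hnorm ip g" using C g by blast
      also have "\<dots> \<le> max C 0 * hnorm ip g" using hnorm_nonneg[OF g(1)] by (simp add: mult_right_mono)
      also have "\<dots> \<le> max C 0" using g(2) hnorm_nonneg[OF g(1)]
        by (metis max.cobounded2 mult.right_neutral mult_left_mono)
      finally show "y \<le> max C 0" .
    qed
    have "hnorm ip (\<lambda>x. \<phi> x * f x) \<le> mult_norm H ip \<phi>"
      unfolding mult_norm_def by (rule cSup_upper[OF _ bdd]) (use fH nf in auto)
    then have le1: "hnorm ip (\<lambda>x. \<phi> x * f x) \<le> 1" using n1 by linarith
    have eq: "(\<lambda>x. \<phi> x * h x) = (\<lambda>x. complex_of_real t * (\<lambda>x. \<phi> x * f x) x)"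
      unfolding f_def using t0 by (auto simp: field_simps)
    have pfH: "(\<lambda>x. \<phi> x * f x) \<in> H" using mH fH by blast
    have "hnorm ip (\<lambda>x. \<phi> x * h x) = t * hnorm ip (\<lambda>x. \<phi> x * f x)"
      unfolding eq hnorm_scale[OF pfH] using t0 by simp
    also have "\<dots> \<le> t" using le1 t0 by simp
    finally show ?thesis unfolding t_def .
  qed
qed

lemma prod_contract:
  assumes "finite B"
    "\<forall>\<nu>\<in>B. \<forall>f\<in>H. (\<lambda>x. \<Phi> \<nu> x * f x) \<in> H \<and> hnorm ip (\<lambda>x. \<Phi> \<nu> x * f x) \<le> hnorm ip f"
  shows "\<forall>f\<in>H. (\<lambda>x. (\<Prod>\<nu>\<in>B. \<Phi> \<nu> x) * f x) \<in> H \<and> hnorm ip (\<lambda>x. (\<Prod>\<nu>\<in>B. \<Phi> \<nu> x) * f x) \<le> hnorm ip f"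
  using assms
proof (induction B rule: finite_induct)
  case empty then show ?case by simp
next
  case (insert a B)
  show ?case
  proof
    fix f assume f: "f \<in> H"
    define g where "g = (\<lambda>x. (\<Prod>\<nu>\<in>B. \<Phi> \<nu> x) * f x)"
    have g: "g \<in> H" "hnorm ip g \<le> hnorm ip f" using insert f unfolding g_def by auto
    have eq: "(\<lambda>x. (\<Prod>\<nu>\<in>insert a B. \<Phi> \<nu> x) * f x) = (\<lambda>x. \<Phi> a x * g x)"
      unfolding g_def using insert.hyps by (simp add: mult.assoc)
    have a: "(\<lambda>x. \<Phi> a x * g x) \<in> H \<and> hnorm ip (\<lambda>x. \<Phi> a x * g x) \<le> hnorm ip g"
      using insert.prems g(1) by blast
    show "(\<lambda>x. (\<Prod>\<nu>\<in>insert a B. \<Phi> \<nu> x) * f x) \<in> H \<and>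
        hnorm ip (\<lambda>x. (\<Prod>\<nu>\<in>insert a B. \<Phi> \<nu> x) * f x) \<le> hnorm ip f"
      unfolding eq using a g(2) by linarith
  qed
qed

lemma key:
  assumes kern: "\<forall>z. (\<lambda>x. l x z) \<noteq> (\<lambda>_. 0)"
    and psiH: "\<forall>f\<in>H. (\<lambda>x. \<psi> x * f x) \<in> H \<and> hnorm ip (\<lambda>x. \<psi> x * f x) \<le> hnorm ip f"
    and fin: "finite A" and z: "\<forall>\<nu>\<in>A. \<psi> \<nu> = 0"
  shows "cmod (\<psi> \<mu>) \<le> hnorm ip (\<lambda>x. khat l ip \<mu> x - (\<Sum>\<nu>\<in>A. c \<nu> * khat l ip \<nu> x))"
proof -
  define N where "N w = hnorm ip (\<lambda>y. l y w)" for w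
  have lw: "ip (\<lambda>y. l y w) (\<lambda>y. l y w) = l w w" for w using repr[OF kH] by simp
  have Npos: "N w > 0" for w
  proof -
    have "Re (ip (\<lambda>y. l y w) (\<lambda>y. l y w)) \<noteq> 0"
    proof
      assume "Re (ip (\<lambda>y. l y w) (\<lambda>y. l y w)) = 0"
      then have "ip (\<lambda>y. l y w) (\<lambda>y. l y w) = 0" using ip_real[OF kH, of w] by (metis of_real_0)
      then show False using ip_zero[OF kH] kern by blast
    qed
    then have "Re (ip (\<lambda>y. l y w) (\<lambda>y. l y w)) > 0" using ip_pos[OF kH] by (metis order_le_less)
    then show ?thesis unfolding N_def hnorm_def by simp
  qed
  have lww: "l w w = complex_of_real ((N w)^2)" for w
  proof -
    have "(N w)^2 = Re (ip (\<lambda>y. l y w) (\<lambda>y. l y w))" unfolding N_def hnorm_def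
      using ip_pos[OF kH] by simp
    then show ?thesis using ip_real[OF kH, of w] lw by metis
  qed
  have kh: "khat l ip w = (\<lambda>x. complex_of_real (inverse (N w)) * l x w)" for w
    unfolding khat_def N_def by (auto simp: divide_inverse mult.commute)
  have khH: "khat l ip w \<in> H" for w unfolding kh using scale_H kH by blast
  define u where "u = (\<lambda>x. \<psi> x * l x \<mu>)"
  have uH: "u \<in> H" and un: "hnorm ip u \<le> N \<mu>" using psiH kH unfolding u_def N_def by auto
  have ipk: "ip u (khat l ip w) = complex_of_real (inverse (N w)) * (\<psi> w * l w \<mu>)" for w
    unfolding kh using ip_scale_r[OF kH uH] repr[OF uH] u_def by simp
  define g where "g = (\<lambda>x. khat l ip \<mu> x - (\<Sum>\<nu>\<in>A. c \<nu> * khat l ip \<nu> x))"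
  have sH: "(\<lambda>x. \<Sum>\<nu>\<in>A. c \<nu> * khat l ip \<nu> x) \<in> H" using sum_H[OF fin] khH by blast
  have gH: "g \<in> H" unfolding g_def using diff_H[OF khH sH] .
  have sr: "ip u (\<lambda>x. \<Sum>\<nu>\<in>A. c \<nu> * khat l ip \<nu> x) = (\<Sum>\<nu>\<in>A. cnj (c \<nu>) * ip u (khat l ip \<nu>))"
    using ip_sum_r[OF fin _ uH, of "khat l ip" c] khH by blast
  have "ip u g = ip u (khat l ip \<mu>) - (\<Sum>\<nu>\<in>A. cnj (c \<nu>) * ip u (khat l ip \<nu>))"
    unfolding g_def ip_diff_r[OF khH sH uH] sr ..
  also have "(\<Sum>\<nu>\<in>A. cnj (c \<nu>) * ip u (khat l ip \<nu>)) = 0"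
    using z by (simp add: ipk)
  also have "ip u (khat l ip \<mu>) = \<psi> \<mu> * complex_of_real (N \<mu>)"
    unfolding ipk lww using Npos[of \<mu>] by (simp add: power2_eq_square field_simps)
  finally have "ip u g = \<psi> \<mu> * complex_of_real (N \<mu>)" by simp
  then have "cmod (\<psi> \<mu>) * N \<mu> = cmod (ip u g)" using Npos[of \<mu>] by (simp add: norm_mult)
  also have "\<dots> \<le> hnorm ip u * hnorm ip g" by (rule CS[OF uH gH])
  also have "\<dots> \<le> N \<mu> * hnorm ip g" using un hnorm_nonneg[OF gH] by (simp add: mult_right_mono)
  finally have "cmod (\<psi> \<mu>) * N \<mu> \<le> hnorm ip g * N \<mu>" by (simp add: mult.commute)
  then have "cmod (\<psi> \<mu>) \<le> hnorm ip g" using Npos[of \<mu>] by simp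
  then show ?thesis unfolding g_def .
qed
end


theorem proposition5p3:
  fixes l :: "'x \<Rightarrow> 'x \<Rightarrow> complex"
    and H :: "('x \<Rightarrow> complex) set"
    and ip :: "('x \<Rightarrow> complex) \<Rightarrow> ('x \<Rightarrow> complex) \<Rightarrow> complex"
  assumes "kernel l"
    and "is_rkhs l H ip"
    and "multiplier_separation l H ip"
  shows "automatic_separation l ip"
proof -
  interpret rk l H ip by unfold_locales (rule assms(2))
  have kern: "\<forall>z. (\<lambda>x. l x z) \<noteq> (\<lambda>_. 0)" using assms(1) unfolding kernel_def by blast
  show ?thesis unfolding automatic_separation_def
  proof (intro allI impI)
    fix s :: "nat \<Rightarrow> 'x" and n :: nat
    assume ws: "weakly_separated l ip s" and n3: "3 \<le> n"
    obtain e0 where e0: "e0 > 0" "\<forall>i j. i \<noteq> j \<longrightarrow> dker l ip (s i) (s j) \<ge> e0"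
      using ws unfolding weakly_separated_def by blast
    have "e0 / 2 > 0" using e0 by simp
    then obtain e where e: "e > 0" and sep: "\<forall>la mu. la \<noteq> mu \<and> dker l ip la mu > e0 / 2 \<longrightarrow>
        (\<exists>\<phi>. is_multiplier H ip \<phi> \<and> mult_norm H ip \<phi> \<le> 1 \<and> \<phi> la = complex_of_real e \<and> \<phi> mu = 0)"
      using assms(3) unfolding multiplier_separation_def by blast
    show "n_weakly_separated n l ip s" unfolding n_weakly_separated_def
    proof (rule exI[of _ "e^(n-1)"], intro conjI allI impI ballI)
      show "e^(n-1) > 0" using e by simp
      fix S \<mu> assume S: "S \<subseteq> range s \<and> finite S \<and> card S = n" and \<mu>: "\<mu> \<in> S"
      define A where "A = S - {\<mu>}"
      have finA: "finite A" using S unfolding A_def by blast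
      have cardA: "card A = n - 1" using S \<mu> unfolding A_def by simp
      have ex: "\<forall>\<nu>\<in>A. \<exists>\<phi>. is_multiplier H ip \<phi> \<and> mult_norm H ip \<phi> \<le> 1 \<and> \<phi> \<mu> = complex_of_real e \<and> \<phi> \<nu> = 0"
      proof
        fix \<nu> assume \<nu>: "\<nu> \<in> A"
        then have ne: "\<mu> \<noteq> \<nu>" and \<nu>S: "\<nu> \<in> S" unfolding A_def by auto
        obtain i where i: "\<mu> = s i" using S \<mu> by blast
        obtain j where j: "\<nu> = s j" using S \<nu>S by blast
        have "i \<noteq> j" using ne i j by blast
        then have "dker l ip \<mu> \<nu> \<ge> e0" using e0(2) i j by blast
        then have "dker l ip \<mu> \<nu> > e0 / 2" using e0(1) by linarith
        then show "\<exists>\<phi>. is_multiplier H ip \<phi> \<and> mult_norm H ip \<phi> \<le> 1 \<and> \<phi> \<mu> = complex_of_real e \<and> \<phi> \<nu> = 0"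
          using sep ne by blast
      qed
      then obtain \<Phi> where \<Phi>: "\<forall>\<nu>\<in>A. is_multiplier H ip (\<Phi> \<nu>) \<and> mult_norm H ip (\<Phi> \<nu>) \<le> 1 \<and>
          \<Phi> \<nu> \<mu> = complex_of_real e \<and> \<Phi> \<nu> \<nu> = 0"
        by metis
      define \<psi> where "\<psi> = (\<lambda>x. \<Prod>\<nu>\<in>A. \<Phi> \<nu> x)"
      have each: "\<forall>\<nu>\<in>A. \<forall>f\<in>H. (\<lambda>x. \<Phi> \<nu> x * f x) \<in> H \<and> hnorm ip (\<lambda>x. \<Phi> \<nu> x * f x) \<le> hnorm ip f"
        using contract \<Phi> by blast
      have psiH: "\<forall>f\<in>H. (\<lambda>x. \<psi> x * f x) \<in> H \<and> hnorm ip (\<lambda>x. \<psi> x * f x) \<le> hnorm ip f"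
        unfolding \<psi>_def by (rule prod_contract[OF finA each])
      have z: "\<forall>\<nu>\<in>A. \<psi> \<nu> = 0" unfolding \<psi>_def using finA \<Phi> by (metis prod_zero_iff)
      have pm: "\<psi> \<mu> = complex_of_real e ^ card A" unfolding \<psi>_def using \<Phi> by simp
      have cm: "cmod (\<psi> \<mu>) = e ^ (n - 1)" unfolding pm cardA using e by (simp add: norm_power)
      show "e ^ (n - 1) \<le> dist_span ip (khat l ip \<mu>) (khat l ip) (S - {\<mu>})"
        unfolding dist_span_def A_def[symmetric]
      proof (rule cInf_greatest)
        show "{hnorm ip (\<lambda>x. khat l ip \<mu> x - (\<Sum>\<nu>\<in>A. c \<nu> * khat l ip \<nu> x)) | c. True} \<noteq> {}" by blast
      next
        fix y assume "y \<in> {hnorm ip (\<lambda>x. khat l ip \<mu> x - (\<Sum>\<nu>\<in>A. c \<nu> * khat l ip \<nu> x)) | c. True}"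
        then obtain c where y: "y = hnorm ip (\<lambda>x. khat l ip \<mu> x - (\<Sum>\<nu>\<in>A. c \<nu> * khat l ip \<nu> x))" by blast
        show "e ^ (n - 1) \<le> y" unfolding y using key[OF kern psiH finA z, of \<mu> c] cm by simp
      qed
    qed
  qed
qed

end
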